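(* Let $p_*$ be a probability density on $\mathbb{R}^d$, let $L>0$, and set $S=\frac12\log\frac{2L+1}{2L}$. Let $K\in\mathbb{N}_+$, let $\eta>0$ be such that $R=S/\eta$ is a positive integer, and consider the Ornstein–Uhlenbeck process $\mathrm{d}\mathbf{x}_t=-\mathbf{x}_t\,\mathrm{d}t+\sqrt{2}\,\mathrm{d}B_t$, $\mathbf{x}_0\sim p_*$, with $p_{k,t}$ the density of $\mathbf{x}_{kS+t}$. Assume that for every $k\in\{0,\dots,K-1\}$ and $t\in[0,S]$, $\nabla\log p_{k,t}$ is $L$-Lipschitz. For $k\in\{0,\dots,K-1\}$, $r\in\{0,\dots,R-1\}$ and $\mathbf{x}\in\mathbb{R}^d$ define the density $$q_{k,S-r\eta}(\mathbf{x}'|\mathbf{x})\propto\exp\Big(\log p_{k,0}(\mathbf{x}')-\frac{\|\mathbf{x}-e^{-(S-r\eta)}\mathbf{x}'\|^2}{2(1-e^{-2(S-r\eta)})}\Big),$$ and set $\mu_r=\frac12\cdot\frac{e^{-2(S-r\eta)}}{1-e^{-2(S-r\eta)}}$, $L_r=\frac32\cdot\frac{e^{-2(S-r\eta)}}{1-e^{-2(S-r\eta)}}$. Then $\mu_r I\preceq-\nabla^2_{\mathbf{x}'}\log q_{k,S-r\eta}(\mathbf{x}'|\mathbf{x})\preceq L_r I$. *)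

theory Defs
  imports "HOL-Analysis.Analysis"
begin

definition gauss_kernel :: "real \<Rightarrow> 'a::euclidean_space \<Rightarrow> real" where
  "gauss_kernel s z = (2 * pi * s) powr (- (real DIM('a)) / 2) * exp (- ((norm z)^2) / (2 * s))"

definition prob_density :: "('a::euclidean_space \<Rightarrow> real) \<Rightarrow> bool" where
  "prob_density p \<longleftrightarrow> p \<in> borel_measurable lborel \<and> (\<forall>x. 0 \<le> p x)
     \<and> integrable lborel p \<and> integral\<^sup>L lborel p = 1"

text \<open>Density at time t of the OU process dx = -x dt + sqrt 2 dB with x_0 having density p0:
  x_t = e^(-t) x_0 + sqrt(1 - e^(-2t)) Z, hence the density is a Gaussian convolution.\<close>
definition OU_density :: "('a::euclidean_space \<Rightarrow> real) \<Rightarrow> real \<Rightarrow> 'a \<Rightarrow> real" where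
  "OU_density p0 t x = (if t = 0 then p0 x
     else \<integral>y. p0 y * gauss_kernel (1 - exp (-2 * t)) (x - exp (- t) *\<^sub>R y) \<partial>lborel)"

definition grad_log_lipschitz :: "real \<Rightarrow> ('a::euclidean_space \<Rightarrow> real) \<Rightarrow> bool" where
  "grad_log_lipschitz L p \<longleftrightarrow> (\<forall>x. 0 < p x) \<and>
     (\<exists>G. (\<forall>x. ((\<lambda>y. ln (p y)) has_derivative (\<lambda>h. G x \<bullet> h)) (at x))
        \<and> (\<forall>x y. norm (G x - G y) \<le> L * norm (x - y)))"

definition hessian_at :: "('a::euclidean_space \<Rightarrow> real) \<Rightarrow> 'a \<Rightarrow> ('a \<Rightarrow> 'a) \<Rightarrow> bool" where
  "hessian_at g x H \<longleftrightarrow> (\<exists>G. (\<forall>\<^sub>F y in nhds x. (g has_derivative (\<lambda>h. G y \<bullet> h)) (at y))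
     \<and> (G has_derivative H) (at x))"

definition q_cond :: "('a::euclidean_space \<Rightarrow> real) \<Rightarrow> real \<Rightarrow> 'a \<Rightarrow> 'a \<Rightarrow> real" where
  "q_cond p \<tau> x x' =
     (let f = (\<lambda>z. exp (ln (p z) - (norm (x - exp (- \<tau>) *\<^sub>R z))^2 / (2 * (1 - exp (-2 * \<tau>)))))
      in f x' / (\<integral>z. f z \<partial>lborel))"

end

theory Submission
  imports Defs "HOL-Probability.Probability"
begin


lemma gauss1_integrable:
  assumes "(\<beta>::real) > 0"
  shows "integrable lborel (\<lambda>t::real. exp (- \<beta> * t^2))"
proof -
  define \<sigma> where "\<sigma> = sqrt (1 / (2 * \<beta>))"
  have s: "\<sigma> > 0" using assms by (simp add: \<sigma>_def)
  have s2: "\<sigma>^2 = 1/(2*\<beta>)" using assms by (simp add: \<sigma>_def)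
  have "integrable lborel (\<lambda>x. normal_density 0 \<sigma> x * (x - 0)^0)"
    by (rule integrable_normal_moment[OF s])
  then have "integrable lborel (\<lambda>x. sqrt (2 * pi * \<sigma>\<^sup>2) * (normal_density 0 \<sigma> x))"
    by simp
  moreover have "(\<lambda>x. sqrt (2 * pi * \<sigma>\<^sup>2) * (normal_density 0 \<sigma> x)) = (\<lambda>t. exp (- \<beta> * t^2))"
    using s assms by (auto simp: normal_density_def s2 fun_eq_iff)
  ultimately show ?thesis by simp
qed

lemma gauss_integrable:
  assumes "(\<beta>::real) > 0"
  shows "integrable lborel (\<lambda>z::'a::euclidean_space. exp (- \<beta> * norm z ^ 2))"
proof (subst integrable_iff_bounded, intro conjI)
  show "(\<lambda>z::'a. exp (- \<beta> * norm z ^ 2)) \<in> borel_measurable lborel"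
    by measurable
  have eq: "\<And>z::'a. ennreal (norm (exp (- \<beta> * norm z ^ 2))) = (\<Prod>b\<in>Basis. ennreal (exp (- \<beta> * (z \<bullet> b)^2)))"
  proof -
    fix z :: 'a
    have "norm z ^ 2 = (\<Sum>b\<in>Basis. (z \<bullet> b)^2)"
      unfolding power2_norm_eq_inner by (subst euclidean_inner) (simp add: power2_eq_square)
    then have "exp (- \<beta> * norm z ^ 2) = (\<Prod>b\<in>Basis. exp (- \<beta> * (z \<bullet> b)^2))"
      by (simp add: sum_distrib_left exp_sum[symmetric] sum_negf)
    then show "ennreal (norm (exp (- \<beta> * norm z ^ 2))) = (\<Prod>b\<in>Basis. ennreal (exp (- \<beta> * (z \<bullet> b)^2)))"
      by (simp add: prod_ennreal prod_nonneg abs_of_nonneg)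
  qed
  have fin: "(\<integral>\<^sup>+t. ennreal (exp (- \<beta> * t^2)) \<partial>lborel) < \<infinity>"
    using gauss1_integrable[OF assms] by (simp add: integrable_iff_bounded)
  have "(\<integral>\<^sup>+z. ennreal (norm (exp (- \<beta> * norm (z::'a) ^ 2))) \<partial>lborel)
      = (\<Prod>b\<in>(Basis::'a set). (\<integral>\<^sup>+t. ennreal (exp (- \<beta> * t^2)) \<partial>lborel))"
    unfolding eq by (subst nn_integral_lborel_prod) auto
  also have "\<dots> < \<infinity>" using fin by (simp add: power_less_top_ennreal)
  finally show "(\<integral>\<^sup>+z. ennreal (norm (exp (- \<beta> * norm (z::'a) ^ 2))) \<partial>lborel) < \<infinity>" .
qed


lemma grad_unique:
  fixes a b :: "'a::euclidean_space"
  assumes "(f has_derivative (\<lambda>h. a \<bullet> h)) (at y)" "(f has_derivative (\<lambda>h. b \<bullet> h)) (at y)"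
  shows "a = b"
proof -
  have "(\<lambda>h. a \<bullet> h) = (\<lambda>h. b \<bullet> h)" using has_derivative_unique[OF assms] .
  then have "a \<bullet> (a - b) = b \<bullet> (a - b)" by metis
  then have "(a - b) \<bullet> (a - b) = 0" by (simp add: inner_diff_left)
  then show ?thesis by simp
qed

lemma lip_deriv_bound:
  fixes G :: "'a::euclidean_space \<Rightarrow> 'b::real_normed_vector"
  assumes d: "(G has_derivative D) (at x)" and lip: "\<forall>x y. norm (G x - G y) \<le> L * norm (x - y)"
  shows "norm (D v) \<le> L * norm v"
proof (rule ccontr)
  assume A: "\<not> norm (D v) \<le> L * norm v"
  have lin: "linear D" using d has_derivative_linear by blast
  have "v \<noteq> 0" using A linear_0[OF lin] by auto
  then have nv: "norm v > 0" by simp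
  define e where "e = (norm (D v) - L * norm v) / (2 * norm v)"
  have e: "e > 0" using A nv by (simp add: e_def)
  obtain d where d0: "d > 0" and dd: "\<forall>y. norm (y - x) < d \<longrightarrow> norm (G y - G x - D (y - x)) \<le> e * norm (y - x)"
    using d e unfolding has_derivative_at_alt by blast
  define t where "t = d / (2 * norm v)"
  have t: "t > 0" using d0 nv by (simp add: t_def)
  have ny: "norm ((x + t *\<^sub>R v) - x) = t * norm v" using t by simp
  have "t * norm v < d" using d0 nv by (simp add: t_def)
  then have 1: "norm (G (x + t *\<^sub>R v) - G x - t *\<^sub>R D v) \<le> e * (t * norm v)"
    using dd[rule_format, of "x + t *\<^sub>R v"] ny by (simp add: linear_scale[OF lin] abs_of_pos[OF t])
  have 2: "norm (G (x + t *\<^sub>R v) - G x) \<le> L * (t * norm v)"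
    using lip[rule_format, of "x + t *\<^sub>R v" x] t by simp
  have "t * norm (D v) = norm (t *\<^sub>R D v)" using t by simp
  also have "\<dots> \<le> norm (G (x + t *\<^sub>R v) - G x) + norm (G (x + t *\<^sub>R v) - G x - t *\<^sub>R D v)"
    by (metis norm_triangle_ineq4 diff_diff_eq2 add.commute diff_add_cancel norm_minus_commute order_refl
        norm_diff_ineq  norm_triangle_sub)
  also have "\<dots> \<le> t * (L * norm v + e * norm v)" using 1 2 by (simp add: algebra_simps)
  finally have "norm (D v) \<le> L * norm v + e * norm v" using t by simp
  moreover have "e * norm v = (norm (D v) - L * norm v) / 2" using nv by (simp add: e_def)
  ultimately have "norm (D v) \<le> L * norm v + (norm (D v) - L * norm v) / 2" by simp
  then have "norm (D v) \<le> L * norm v" by (simp add: field_simps)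
  then show False using A by simp
qed

lemma taylor_upper:
  fixes g :: "'a::euclidean_space \<Rightarrow> real"
  assumes dg: "\<forall>y. (g has_derivative (\<lambda>h. G y \<bullet> h)) (at y)"
    and lip: "\<forall>x y. norm (G x - G y) \<le> L * norm (x - y)"
  shows "g z \<le> g 0 + G 0 \<bullet> z + L / 2 * (norm z)^2"
proof -
  define \<phi> where "\<phi> t = g (t *\<^sub>R z) - t * (G 0 \<bullet> z) - L * t^2 * (norm z)^2 / 2" for t :: real
  have der: "(\<phi> has_real_derivative (G (t *\<^sub>R z) \<bullet> z - G 0 \<bullet> z - L * t * (norm z)^2)) (at t)" for t
  proof -
    have "((\<lambda>t. g (t *\<^sub>R z)) has_derivative (\<lambda>s. G (t *\<^sub>R z) \<bullet> (s *\<^sub>R z))) (at t)"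
    proof -
      have h1: "((\<lambda>t. t *\<^sub>R z) has_derivative (\<lambda>s. s *\<^sub>R z)) (at t)"
        by (rule bounded_linear_imp_has_derivative) (rule bounded_linear_scaleR_left)
      have h2: "(g has_derivative (\<lambda>h. G (t *\<^sub>R z) \<bullet> h)) (at (t *\<^sub>R z))" using dg by blast
      show ?thesis using has_derivative_compose[OF h1 h2] by (simp add: o_def)
    qed
    then have "((\<lambda>t. g (t *\<^sub>R z)) has_real_derivative (G (t *\<^sub>R z) \<bullet> z)) (at t)"
    proof -
      have "(\<lambda>s. s * (G (t *\<^sub>R z) \<bullet> z)) = (*) (G (t *\<^sub>R z) \<bullet> z)" by (auto simp: fun_eq_iff)
      then show ?thesis using \<open>((\<lambda>t. g (t *\<^sub>R z)) has_derivative (\<lambda>s. G (t *\<^sub>R z) \<bullet> (s *\<^sub>R z))) (at t)\<close>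
        unfolding has_field_derivative_def by simp
    qed
    then show ?thesis unfolding \<phi>_def
      by (auto intro!: derivative_eq_intros)
  qed
  have "\<phi> 1 \<le> \<phi> 0"
  proof (rule DERIV_nonpos_imp_decreasing_open[of 0 1])
    show "continuous_on {0..1} \<phi>" using der
      by (meson DERIV_isCont continuous_at_imp_continuous_on)
    fix t :: real assume t: "0 < t" "t < 1"
    have "G (t *\<^sub>R z) \<bullet> z - G 0 \<bullet> z = (G (t *\<^sub>R z) - G 0) \<bullet> z" by (simp add: inner_diff_left)
    also have "\<dots> \<le> norm (G (t *\<^sub>R z) - G 0) * norm z" by (rule Cauchy_Schwarz_ineq2[THEN order_trans[OF abs_ge_self]])
    also have "\<dots> \<le> (L * (t * norm z)) * norm z"
      using lip[rule_format, of "t *\<^sub>R z" 0] t by (intro mult_right_mono) auto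
    finally have "G (t *\<^sub>R z) \<bullet> z - G 0 \<bullet> z - L * t * (norm z)^2 \<le> 0" by (simp add: power2_eq_square algebra_simps)
    then show "\<exists>y. (\<phi> has_real_derivative y) (at t) \<and> y \<le> 0" using der by blast
  qed simp
  then show ?thesis unfolding \<phi>_def by simp
qed

lemma amgm:
  assumes "(L::real) > 0"
  shows "(g::real) * w \<le> L / 8 * w^2 + 2 * g^2 / L"
proof -
  have "0 \<le> (L * w - 4 * g)^2" by simp
  then have "8 * L * (g * w) \<le> L^2 * w^2 + 16 * g^2" by (simp add: power2_eq_square algebra_simps)
  then have "g * w \<le> (L^2 * w^2 + 16 * g^2) / (8 * L)" using assms by (simp add: pos_le_divide_eq mult.commute)
  also have "\<dots> = L / 8 * w^2 + 2 * g^2 / L" using assms by (simp add: field_simps power2_eq_square)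
  finally show ?thesis .
qed

theorem lemma10:
  fixes p_star :: "'a::euclidean_space \<Rightarrow> real"
    and L S \<eta> :: real and K R k r :: nat and x x' :: 'a and H :: "'a \<Rightarrow> 'a"
  assumes "prob_density p_star"
    and "L > 0"
    and "S = ln ((2 * L + 1) / (2 * L)) / 2"
    and "K \<ge> 1"
    and "\<eta> > 0" and "R \<ge> 1" and "S / \<eta> = real R"
    and "\<forall>k<K. \<forall>t\<in>{0..S}. grad_log_lipschitz L (OU_density p_star (real k * S + t))"
    and "k < K" and "r < R"
    and "hessian_at (\<lambda>z. - ln (q_cond (OU_density p_star (real k * S)) (S - real r * \<eta>) x z)) x' H"
  shows "\<forall>v. (1/2) * (exp (-2 * (S - real r * \<eta>)) / (1 - exp (-2 * (S - real r * \<eta>)))) * (norm v)^2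
                \<le> v \<bullet> H v
           \<and> v \<bullet> H v
                \<le> (3/2) * (exp (-2 * (S - real r * \<eta>)) / (1 - exp (-2 * (S - real r * \<eta>)))) * (norm v)^2"
  
proof -
  define \<tau> where "\<tau> = S - real r * \<eta>"
  define p where "p = OU_density p_star (real k * S)"
  have Lpos: "L > 0" by fact
  have S_eq: "S = real R * \<eta>" using assms(5,7) by (simp add: field_simps)
  have "real r + 1 \<le> real R" using assms(10) by simp
  then have "real r * \<eta> + \<eta> \<le> real R * \<eta>" using assms(5)
    by (metis distrib_right mult_1 mult_right_mono less_imp_le)
  then have tau_pos: "\<tau> > 0" using assms(5,10) S_eq by (simp add: \<tau>_def algebra_simps)
  have tau_le: "\<tau> \<le> S" using assms(5) by (simp add: \<tau>_def)
  have e2S: "exp (-2 * S) = 2 * L / (2 * L + 1)"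
  proof -
    have "-2 * S = - ln ((2 * L + 1) / (2 * L))" using assms(3) by simp
    then have "exp (-2 * S) = inverse ((2 * L + 1) / (2 * L))"
      using Lpos by (simp add: exp_minus)
    then show ?thesis by simp
  qed
  define u where "u = exp (-2 * \<tau>)"
  have u_ge: "u \<ge> 2 * L / (2 * L + 1)" unfolding u_def e2S[symmetric] using tau_le by simp
  have u_lt: "u < 1" unfolding u_def using tau_pos by simp
  have u_pos: "u > 0" unfolding u_def by simp
  define c where "c = u / (1 - u)"
  have c_ge: "c \<ge> 2 * L"
  proof -
    have "2 * L \<le> u * (2 * L + 1)" using u_ge Lpos by (simp add: field_simps)
    then have "2 * L * (1 - u) \<le> u" by (simp add: algebra_simps)
    then show ?thesis unfolding c_def using u_lt by (simp add: field_simps)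
  qed
  define a where "a = exp (- \<tau>)"
  define s where "s = 1 - exp (-2 * \<tau>)"
  have a_pos: "a > 0" by (simp add: a_def)
  have s_pos: "s > 0" using u_lt by (simp add: s_def u_def)
  have aa: "a * a = u" unfolding a_def u_def by (simp add: exp_add[symmetric])
  have c_eq: "c = a * a / s" unfolding c_def aa s_def u_def ..
  have "grad_log_lipschitz L (OU_density p_star (real k * S + 0))"
    using assms(8) assms(9) S_eq assms(5) by (auto simp del: add_0_right)
  then have "grad_log_lipschitz L p" by (simp add: p_def)
  then obtain G where ppos: "\<And>z. 0 < p z"
      and dG: "\<forall>y. ((\<lambda>y. ln (p y)) has_derivative (\<lambda>h. G y \<bullet> h)) (at y)"
      and lipG: "\<forall>x y. norm (G x - G y) \<le> L * norm (x - y)"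
    unfolding grad_log_lipschitz_def by blast
  define Q where "Q z = (norm (x - a *\<^sub>R z))^2 / (2 * s)" for z
  define f where "f z = exp (ln (p z) - Q z)" for z
  define I where "I = (\<integral>z. f z \<partial>lborel)"
  have fpos: "f z > 0" for z by (simp add: f_def)
  have qc: "q_cond p \<tau> x z = f z / I" for z
    unfolding q_cond_def Let_def f_def Q_def I_def a_def s_def ..
  have cont_lnp: "continuous_on UNIV (\<lambda>z. ln (p z))"
    using dG by (meson continuous_at_imp_continuous_on has_derivative_continuous)
  have f_meas: "f \<in> borel_measurable lborel"
  proof -
    have "continuous_on UNIV Q" unfolding Q_def using s_pos by (intro continuous_intros) auto
    then have "continuous_on UNIV f" unfolding f_def
      by (intro continuous_on_exp continuous_on_diff cont_lnp)
    then show ?thesis by (simp add: borel_measurable_continuous_onI)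
  qed
  define C0 where "C0 = ln (p 0) + 2 * (norm (G 0))^2 / L + 3 * (norm x)^2 / (2 * s)"
  have fbound: "f z \<le> exp C0 * exp (- (L / 8) * norm z ^ 2)" for z
  proof -
    have t1: "ln (p z) \<le> ln (p 0) + G 0 \<bullet> z + L / 2 * (norm z)^2"
      by (rule taylor_upper[OF dG lipG])
    have "G 0 \<bullet> z \<le> norm (G 0) * norm z" by (rule norm_cauchy_schwarz)
    also have "\<dots> \<le> L / 8 * (norm z)^2 + 2 * (norm (G 0))^2 / L"
      using amgm[OF Lpos] by simp
    finally have t2: "G 0 \<bullet> z \<le> L / 8 * (norm z)^2 + 2 * (norm (G 0))^2 / L" .
    have "(norm (x - a *\<^sub>R z))^2 = (norm x)^2 - 2 * a * (x \<bullet> z) + a * a * (norm z)^2"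
      by (simp add: power2_norm_eq_inner inner_diff_left inner_diff_right algebra_simps inner_commute)
    moreover have "x \<bullet> z \<le> norm x * norm z" by (rule norm_cauchy_schwarz)
    ultimately have "(norm (x - a *\<^sub>R z))^2 \<ge> (norm x)^2 - 2 * a * (norm x * norm z) + a * a * (norm z)^2"
      using a_pos by (smt (verit) mult_left_mono)
    moreover have "0 \<le> (a / 2 * norm z - 2 * norm x)^2" by simp
    ultimately have "(norm (x - a *\<^sub>R z))^2 \<ge> 3 / 4 * (a * a) * (norm z)^2 - 3 * (norm x)^2"
      by (simp add: power2_eq_square algebra_simps)
    then have "Q z \<ge> (3 / 4 * (a * a) * (norm z)^2 - 3 * (norm x)^2) / (2 * s)"
      unfolding Q_def using s_pos by (simp add: divide_right_mono)
    also have "(3 / 4 * (a * a) * (norm z)^2 - 3 * (norm x)^2) / (2 * s)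
        = 3 / 8 * c * (norm z)^2 - 3 * (norm x)^2 / (2 * s)"
      unfolding c_eq using s_pos by (simp add: field_simps)
    finally have t3: "Q z \<ge> 3 / 8 * c * (norm z)^2 - 3 * (norm x)^2 / (2 * s)" .
    have "3 / 8 * c * (norm z)^2 \<ge> 3 / 4 * L * (norm z)^2"
    proof -
      have "2 * L * (norm z)^2 \<le> c * (norm z)^2" by (rule mult_right_mono[OF c_ge]) simp
      then show ?thesis by simp
    qed
    with t1 t2 t3 have "ln (p z) - Q z \<le> C0 + (- (L / 8) * norm z ^ 2)"
      unfolding C0_def by (simp add: algebra_simps)
    then show ?thesis unfolding f_def by (simp add: exp_add[symmetric])
  qed
  have f_int: "integrable lborel f"
  proof (rule Bochner_Integration.integrable_bound[OF _ f_meas])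
    show "integrable lborel (\<lambda>z::'a. exp C0 * exp (- (L / 8) * norm z ^ 2))"
      using gauss_integrable[of "L / 8"] Lpos by simp
    show "AE z in lborel. norm (f z) \<le> norm (exp C0 * exp (- (L / 8) * norm z ^ 2))"
      using fbound fpos by (simp add: less_imp_le abs_of_pos)
  qed
  have I_pos: "I > 0"
  proof -
    have "I \<ge> 0" unfolding I_def by (rule Bochner_Integration.integral_nonneg) (simp add: less_imp_le fpos)
    moreover have "I \<noteq> 0"
    proof
      assume "I = 0"
      then have "AE z in lborel. f z = 0"
        using integral_nonneg_eq_0_iff_AE[OF f_int] fpos unfolding I_def by (simp add: less_imp_le)
      then have "AE z in lborel. z \<notin> (UNIV :: 'a set)" using fpos by (simp add: less_imp_neq[symmetric])
      then have "(UNIV :: 'a set) \<in> null_sets lborel" by (subst AE_iff_null_sets) auto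
      then show False by auto
    qed
    ultimately show ?thesis by simp
  qed
  have mq: "(\<lambda>z. - ln (q_cond p \<tau> x z)) = (\<lambda>z. Q z - ln (p z) + ln I)"
  proof
    fix z
    have "ln (f z / I) = ln (f z) - ln I" using fpos[of z] I_pos by (simp add: ln_div)
    then show "- ln (q_cond p \<tau> x z) = Q z - ln (p z) + ln I" unfolding qc by (simp add: f_def)
  qed
  define gQ where "gQ y = (a / s) *\<^sub>R (a *\<^sub>R y - x)" for y
  have dQ: "(Q has_derivative (\<lambda>h. gQ y \<bullet> h)) (at y)" for y
  proof -
    have "Q = (\<lambda>z. ((x - a *\<^sub>R z) \<bullet> (x - a *\<^sub>R z)) / (2 * s))"
      unfolding Q_def by (simp add: power2_norm_eq_inner)
    moreover have "((\<lambda>z. ((x - a *\<^sub>R z) \<bullet> (x - a *\<^sub>R z)) / (2 * s)) has_derivative (\<lambda>h. gQ y \<bullet> h)) (at y)"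
      unfolding gQ_def using s_pos
      by (auto intro!: derivative_eq_intros simp: inner_diff_left inner_diff_right algebra_simps field_simps inner_commute)
    ultimately show ?thesis by simp
  qed
  have dmq: "((\<lambda>z. - ln (q_cond p \<tau> x z)) has_derivative (\<lambda>h. (gQ y - G y) \<bullet> h)) (at y)" for y
  proof -
    have "((\<lambda>z. Q z - ln (p z)) has_derivative (\<lambda>h. gQ y \<bullet> h - G y \<bullet> h)) (at y)"
      using has_derivative_diff[OF dQ[of y] dG[rule_format, of y]] .
    then have "((\<lambda>z. Q z - ln (p z) + ln I) has_derivative (\<lambda>h. gQ y \<bullet> h - G y \<bullet> h)) (at y)"
      by (rule has_derivative_add_const)
    then show ?thesis unfolding mq by (simp add: inner_diff_left)
  qed
  obtain G' where evG': "\<forall>\<^sub>F y in nhds x'. ((\<lambda>z. - ln (q_cond p \<tau> x z)) has_derivative (\<lambda>h. G' y \<bullet> h)) (at y)"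
      and dH: "(G' has_derivative H) (at x')"
    using assms(11) unfolding hessian_at_def p_def \<tau>_def by blast
  obtain U where U: "open U" "x' \<in> U" "\<And>y. y \<in> U \<Longrightarrow> ((\<lambda>z. - ln (q_cond p \<tau> x z)) has_derivative (\<lambda>h. G' y \<bullet> h)) (at y)"
    using evG' unfolding eventually_nhds by blast
  have GU: "gQ y - G' y = G y" if "y \<in> U" for y
    using grad_unique[OF U(3)[OF that] dmq[of y]] by simp
  have dgQ: "(gQ has_derivative (\<lambda>h. (a / s) *\<^sub>R (a *\<^sub>R h))) (at x')"
    unfolding gQ_def by (auto intro!: derivative_eq_intros)
  have dGx: "(G has_derivative (\<lambda>h. (a / s) *\<^sub>R (a *\<^sub>R h) - H h)) (at x')"
    by (rule has_derivative_transform_within_open[OF has_derivative_diff[OF dgQ dH] U(1) U(2)])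
       (simp add: GU)
  have Hb: "norm (c *\<^sub>R v - H v) \<le> L * norm v" for v
    using lip_deriv_bound[OF dGx lipG, of v] by (simp add: c_eq)
  have key: "\<bar>v \<bullet> H v - c * (norm v)^2\<bar> \<le> L * (norm v)^2" for v
  proof -
    have "v \<bullet> H v - c * (norm v)^2 = - (v \<bullet> (c *\<^sub>R v - H v))"
      by (simp add: inner_diff_right power2_norm_eq_inner)
    then have "\<bar>v \<bullet> H v - c * (norm v)^2\<bar> = \<bar>v \<bullet> (c *\<^sub>R v - H v)\<bar>" by simp
    also have "\<dots> \<le> norm v * norm (c *\<^sub>R v - H v)" by (rule Cauchy_Schwarz_ineq2)
    also have "\<dots> \<le> norm v * (L * norm v)" by (rule mult_left_mono[OF Hb]) simp
    finally show ?thesis by (simp add: power2_eq_square algebra_simps)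
  qed
  have cform: "exp (-2 * (S - real r * \<eta>)) / (1 - exp (-2 * (S - real r * \<eta>))) = c"
    unfolding c_def u_def \<tau>_def ..
  show ?thesis unfolding cform
  proof
    fix v
    have k: "\<bar>v \<bullet> H v - c * (norm v)^2\<bar> \<le> L * (norm v)^2" by (rule key)
    have "L * (norm v)^2 \<le> c / 2 * (norm v)^2" using c_ge by (intro mult_right_mono) auto
    with k show "1 / 2 * c * (norm v)^2 \<le> v \<bullet> H v \<and> v \<bullet> H v \<le> 3 / 2 * c * (norm v)^2"
      by (simp add: abs_le_iff algebra_simps)
  qed
qed

end
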